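(* Let $U:\mathbb R^m_{++}\to\mathbb R$ be a concave NDAS function and let $s^{opt}$ be a maximizer of $U$ over $B_s$. Let $w^0,w^1\in W$ have weighted centers $(x^0,y^0,s^0)$ and $(x^1,y^1,s^1)$, let $g^0,g^1$ be supergradients of $U$ at $s^0,s^1$, and set $g^{0w}=(Y^0)^{-1}g^0$, $g^{1w}=(Y^1)^{-1}g^1$. Then $$\{w:\ (g^{0w})^\top(w-w^0)\ge 0,\ (g^{1w})^\top(w-w^1)\ge 0\}\cap W_{s^{opt}}\neq\emptyset.$$
   Context: Let $A\in\mathbb R^{m\times n}$ have full column rank $n\le m$ and $b\in\mathbb R^m$ be such that $\{x:Ax\le b\}$ is bounded with nonempty interior. For $w\in\mathbb R^m_{++}$ the weighted center of $w$ is the unique $(x,y,s)$ with $Ax+s=b$, $s>0$, $A^\top y=0$, $\mathrm{Diag}(s)y=w$ ($s$-vector $s$, $y$-vector $y$). Capital letters denote diagonal matrices of vectors. $W=\{w\in\mathbb R^m:w>0,\ e^\top w=1\}$. Centric $s$-vectors are $s$-vectors of weighted centers of elements of $W$; $B_s$ is their set; for centric $s$, $W_s=\{w\in W:$ the $s$-vector of $w$ is $s\}$. Supergradient of concave $U$ at $s^0$: $g$ with $U(s)\le U(s^0)+g^\top(s-s^0)$ for all $s$. A function $f:\mathbb R^m_{++}\to\mathbb R$ is NDAS (non-decreasing under affine scaling) if for every $d\in\mathbb R^m_{++}$, with $D=\mathrm{Diag}(d)$: (1) $f(s)\le\max\{f(Ds),f(D^{-1}s)\}$ for all $s\in\mathbb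 R^m_{++}$; (2) if $f(s^0)\le f(Ds^0)$ for a single $s^0\in\mathbb R^m_{++}$, then $f(s)\le f(Ds)$ for all $s\in\mathbb R^m_{++}$. *)

theory Defs
  imports "HOL-Analysis.Analysis"
begin

definition pos :: "real^'m \<Rightarrow> bool" where
  "pos v \<longleftrightarrow> (\<forall>i. v $ i > 0)"

definition polyh :: "real^'n^'m \<Rightarrow> real^'m \<Rightarrow> (real^'n) set" where
  "polyh A b = {x. \<forall>i. (A *v x) $ i \<le> b $ i}"

definition weighted_center ::
  "real^'n^'m \<Rightarrow> real^'m \<Rightarrow> real^'m \<Rightarrow> real^'n \<Rightarrow> real^'m \<Rightarrow> real^'m \<Rightarrow> bool" where
  "weighted_center A b w x y s \<longleftrightarrow>
     A *v x + s = b \<and> pos s \<and> transpose A *v y = 0 \<and> (\<forall>i. s $ i * y $ i = w $ i)"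

definition Wset :: "(real^'m) set" where
  "Wset = {w. pos w \<and> (\<Sum>i\<in>UNIV. w $ i) = 1}"

definition Bs :: "real^'n^'m \<Rightarrow> real^'m \<Rightarrow> (real^'m) set" where
  "Bs A b = {s. \<exists>w\<in>Wset. \<exists>x y. weighted_center A b w x y s}"

definition Ws :: "real^'n^'m \<Rightarrow> real^'m \<Rightarrow> real^'m \<Rightarrow> (real^'m) set" where
  "Ws A b s = {w \<in> Wset. \<exists>x y. weighted_center A b w x y s}"

definition supergradient :: "(real^'m \<Rightarrow> real) \<Rightarrow> real^'m \<Rightarrow> real^'m \<Rightarrow> bool" where
  "supergradient U s0 g \<longleftrightarrow> (\<forall>s. pos s \<longrightarrow> U s \<le> U s0 + g \<bullet> (s - s0))"

definition NDAS :: "(real^'m \<Rightarrow> real) \<Rightarrow> bool" where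
  "NDAS f \<longleftrightarrow> (\<forall>d. pos d \<longrightarrow>
     (\<forall>s. pos s \<longrightarrow> f s \<le> max (f (\<chi> i. d $ i * s $ i)) (f (\<chi> i. s $ i / d $ i))) \<and>
     ((\<exists>s0. pos s0 \<and> f s0 \<le> f (\<chi> i. d $ i * s0 $ i)) \<longrightarrow>
        (\<forall>s. pos s \<longrightarrow> f s \<le> f (\<chi> i. d $ i * s $ i))))"

end

theory Submission
  imports Defs
begin

lemma orth:
  fixes A :: "real^'n^'m"
  assumes "weighted_center A b w x y s" "weighted_center A b w' x' y' s'"
  shows "s' \<bullet> y = s \<bullet> y"
proof -
  have "s' - s = A *v (x - x')" using assms unfolding weighted_center_def
    by (metis (no_types, lifting) add_diff_cancel_left' diff_diff_eq2 matrix_vector_mult_diff_distrib)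
  moreover have "(A *v z) \<bullet> y = 0" for z
    using assms(1) unfolding weighted_center_def
    by (metis dot_lmul_matrix inner_commute inner_zero_right vector_transpose_matrix)
  ultimately have "(s' - s) \<bullet> y = 0" by simp
  thus ?thesis by (simp add: inner_diff_left)
qed

lemma ypos:
  assumes "weighted_center A b w x y s" "w \<in> Wset"
  shows "y $ i > 0"
proof -
  have "s $ i > 0" "w $ i > 0" using assms unfolding weighted_center_def Wset_def pos_def by auto
  moreover have "s $ i * y $ i = w $ i" using assms unfolding weighted_center_def by auto
  ultimately show ?thesis by (metis zero_less_mult_pos)
qed

lemma wsum:
  assumes "weighted_center A b w x y s" "w \<in> Wset"
  shows "s \<bullet> y = 1"
  using assms unfolding weighted_center_def Wset_def inner_vec_def by simp

lemma inWs:
  fixes A :: "real^'n^'m"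
  assumes "weighted_center A b w x y s" "w \<in> Wset"
    and "weighted_center A b wo xo yo so" "wo \<in> Wset"
  shows "(\<chi> i. so $ i * y $ i) \<in> Ws A b so"
proof -
  have sp: "so $ i > 0" for i using assms(3) unfolding weighted_center_def pos_def by auto
  have "(\<chi> i. so $ i * y $ i) \<in> Wset"
    unfolding Wset_def pos_def
    using orth[OF assms(1,3)] wsum[OF assms(1,2)] sp ypos[OF assms(1,2)]
    by (simp add: inner_vec_def)
  moreover have "weighted_center A b (\<chi> i. so $ i * y $ i) xo y so"
    using assms(1,3) unfolding weighted_center_def by simp
  ultimately show ?thesis unfolding Ws_def by blast
qed

lemma ineq:
  fixes A :: "real^'n^'m"
  assumes "weighted_center A b w0 x0 y0 s0" "w0 \<in> Wset"
    and "weighted_center A b w x y s" "w \<in> Wset"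
    and "weighted_center A b wo xo yo so" "wo \<in> Wset"
    and "supergradient U s0 g0" and "U s0 \<le> U (\<chi> i. y $ i / y0 $ i * so $ i)"
  shows "(\<chi> i. g0 $ i / y0 $ i) \<bullet> ((\<chi> i. so $ i * y $ i) - w0) \<ge> 0"
proof -
  have y0p: "y0 $ i > 0" for i using ypos[OF assms(1,2)] .
  have yp: "y $ i > 0" for i using ypos[OF assms(3,4)] .
  have sp: "so $ i > 0" for i using assms(5) unfolding weighted_center_def pos_def by auto
  let ?s = "(\<chi> i. y $ i / y0 $ i * so $ i)"
  have "pos ?s" unfolding pos_def using y0p yp sp by simp
  hence "U ?s \<le> U s0 + g0 \<bullet> (?s - s0)" using assms(7) unfolding supergradient_def by blast
  hence "g0 \<bullet> (?s - s0) \<ge> 0" using assms(8) by simp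
  moreover have "(\<chi> i. g0 $ i / y0 $ i) \<bullet> ((\<chi> i. so $ i * y $ i) - w0) = g0 \<bullet> (?s - s0)"
  proof -
    have "w0 $ i = s0 $ i * y0 $ i" for i using assms(1) unfolding weighted_center_def by simp
    hence "g0 $ i / y0 $ i * (so $ i * y $ i - w0 $ i) = g0 $ i * (y $ i / y0 $ i * so $ i - s0 $ i)" for i
      using y0p[of i] by (simp add: field_simps)
    thus ?thesis unfolding inner_vec_def by simp
  qed
  ultimately show ?thesis by simp
qed

theorem proposition3p1:
  fixes A :: "real^'n^'m" and b :: "real^'m"
    and U :: "real^'m \<Rightarrow> real"
    and sopt w0 w1 y0 y1 s0 s1 g0 g1 :: "real^'m" and x0 x1 :: "real^'n"
  assumes "rank A = CARD('n)" and "CARD('n) \<le> CARD('m)"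
    and "bounded (polyh A b)" and "interior (polyh A b) \<noteq> {}"
    and "concave_on {s. pos s} U" and "NDAS U"
    and "sopt \<in> Bs A b" and "\<forall>s\<in>Bs A b. U s \<le> U sopt"
    and "w0 \<in> Wset" and "w1 \<in> Wset"
    and "weighted_center A b w0 x0 y0 s0" and "weighted_center A b w1 x1 y1 s1"
    and "supergradient U s0 g0" and "supergradient U s1 g1"
  shows "{w. (\<chi> i. g0 $ i / y0 $ i) \<bullet> (w - w0) \<ge> 0 \<and> (\<chi> i. g1 $ i / y1 $ i) \<bullet> (w - w1) \<ge> 0}
           \<inter> Ws A b sopt \<noteq> {}"
proof -
  obtain wo xo yo where wo: "wo \<in> Wset" "weighted_center A b wo xo yo sopt"
    using assms(7) unfolding Bs_def by blast
  have y0p: "y0 $ i > 0" for i using ypos[OF assms(11,9)] .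
  have y1p: "y1 $ i > 0" for i using ypos[OF assms(12,10)] .
  have spos: "pos sopt" using wo unfolding weighted_center_def by simp
  have U0: "U s0 \<le> U sopt" using assms(8,9,11) unfolding Bs_def by blast
  have U1: "U s1 \<le> U sopt" using assms(8,10,12) unfolding Bs_def by blast
  define d where "d = (\<chi> i. y1 $ i / y0 $ i)"
  have dp: "pos d" unfolding d_def pos_def using y0p y1p by simp
  have "U sopt \<le> max (U (\<chi> i. d $ i * sopt $ i)) (U (\<chi> i. sopt $ i / d $ i))"
    using assms(6) dp spos unfolding NDAS_def by blast
  moreover have e1: "(\<chi> i. d $ i * sopt $ i) = (\<chi> i. y1 $ i / y0 $ i * sopt $ i)"
    unfolding d_def by simp
  moreover have e2: "(\<chi> i. sopt $ i / d $ i) = (\<chi> i. y0 $ i / y1 $ i * sopt $ i)"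
    unfolding d_def by (simp add: field_simps)
  ultimately consider "U sopt \<le> U (\<chi> i. y1 $ i / y0 $ i * sopt $ i)"
    | "U sopt \<le> U (\<chi> i. y0 $ i / y1 $ i * sopt $ i)" by (metis max_def)
  thus ?thesis
  proof cases
    case 1
    have a: "U s1 \<le> U (\<chi> i. y1 $ i / y1 $ i * sopt $ i)"
      using U1 y1p by (simp add: less_imp_neq[symmetric])
    have "(\<chi> i. sopt $ i * y1 $ i) \<in> Ws A b sopt" using inWs[OF assms(12,10) wo(2,1)] .
    moreover have "(\<chi> i. g0 $ i / y0 $ i) \<bullet> ((\<chi> i. sopt $ i * y1 $ i) - w0) \<ge> 0"
      using ineq[OF assms(11,9) assms(12,10) wo(2,1) assms(13)] 1 U0 by linarith
    moreover have "(\<chi> i. g1 $ i / y1 $ i) \<bullet> ((\<chi> i. sopt $ i * y1 $ i) - w1) \<ge> 0"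
      using ineq[OF assms(12,10) assms(12,10) wo(2,1) assms(14) a] .
    ultimately show ?thesis by blast
  next
    case 2
    have a: "U s0 \<le> U (\<chi> i. y0 $ i / y0 $ i * sopt $ i)"
      using U0 y0p by (simp add: less_imp_neq[symmetric])
    have "(\<chi> i. sopt $ i * y0 $ i) \<in> Ws A b sopt" using inWs[OF assms(11,9) wo(2,1)] .
    moreover have "(\<chi> i. g1 $ i / y1 $ i) \<bullet> ((\<chi> i. sopt $ i * y0 $ i) - w1) \<ge> 0"
      using ineq[OF assms(12,10) assms(11,9) wo(2,1) assms(14)] 2 U1 by linarith
    moreover have "(\<chi> i. g0 $ i / y0 $ i) \<bullet> ((\<chi> i. sopt $ i * y0 $ i) - w0) \<ge> 0"
      using ineq[OF assms(11,9) assms(11,9) wo(2,1) assms(13) a] .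
    ultimately show ?thesis by blast
  qed
qed

end
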